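(* Consider $N$ sellers $i=1,\dots,N$ over a time horizon $[0,H]$, a reserve-utility function $\underline{R}:[0,H]\to\mathbb{R}$, and selection functions $f_i:\mathbb{R}^N\times\mathbb{R}\to\mathbb{R}$. Each seller $i$ has true-metric functions $e_i^T,e_i^C:[0,H]\to\mathbb{R}$ and estimated-score functions $\hat e_i^T,\hat e_i^C:[0,H]\to\mathbb{R}$, where we allow $e_i^T\neq e_i^C$ and $\hat e_i^T\ne\hat e_i^C$. In the counterfactual interleaving experiment without feedback loops (defined in the context), let each seller be independently assigned to the treatment group $\mathcal{T}$ with probability $p\in(0,1)$ and otherwise to the control group $\mathcal{C}$. Then $\mathbb{E}[\widehat{GTE}]=\mathrm{GTE}$, where the expectation is over the random assignment.
   Context: Setting without feedback loops: ranking scores equal estimated scores. Global treatment regime: $r_i^{GT}(t)=\hat e_i^T(t)$, $I_i^{GT}(t)=\mathbb{I}\{f_i(r_1^{GT}(t),\dots,r_N^{GT}(t),\underline{R}(t))\ge0\}$, $O_i^{GT}(t)=I_i^{GT}(t)e_i^T(t)$. Global control regime: the same with $\hat e_i^C,e_i^C$, giving $O_i^{GC}$. $\mathrm{GTE}=\frac1N\sum_{i=1}^N\int_0^H(O_i^{GT}(t)-O_i^{GC}(t))dt$. Counterfactual interleaving experiment: given a disjoint partition $\{1,\dots,N\}=\mathcal{T}\cup\mathcal{C}$, two rankings are computed for all sellers, $r_j^T(t)=\hat e_j^T(t)$ and $r_j^C(t)=\hat e_j^C(t)$ for all $j=1,\dots,N$; for $i\in\mathcal{T}$, $I_i^T(t)=\mathbb{I}\{f_i(r_1^T(t),\dots,r_N^T(t),\underline{R}(t))\ge0\}$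 and $O_i^T(t)=I_i^T(t)e_i^T(t)$; for $i\in\mathcal{C}$, $I_i^C(t)=\mathbb{I}\{f_i(r_1^C(t),\dots,r_N^C(t),\underline{R}(t))\ge0\}$ and $O_i^C(t)=I_i^C(t)e_i^C(t)$ (position conflicts between the two rankings are ignored). The estimator is $\widehat{GTE}=\frac{1}{Np}\sum_{i\in\mathcal{T}}\int_0^H O_i^T(t)dt-\frac{1}{N(1-p)}\sum_{i\in\mathcal{C}}\int_0^H O_i^C(t)dt$. *)

theory Defs
  imports "HOL-Analysis.Analysis" "HOL-Probability.Probability"
begin

text \<open>Sellers are the elements of a finite type 'n, so N = CARD('n).
  Selection functions f i : R^N x R -> R; reserve utility Rlow : [0,H] -> R.
  Score / metric functions are indexed by seller and time.\<close>

type_synonym 'n sel = "'n \<Rightarrow> real^'n \<Rightarrow> real \<Rightarrow> real"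

text \<open>Global regime (treatment if ehat = ehat^T, e = e^T; control otherwise):
  r_i(t) = ehat_i(t), I_i(t) = [f_i(r(t), R(t)) >= 0], O_i(t) = I_i(t) e_i(t).\<close>

definition global_rank :: "('n::finite \<Rightarrow> real \<Rightarrow> real) \<Rightarrow> real \<Rightarrow> real^'n" where
  "global_rank ehat t = (\<chi> j. ehat j t)"

definition global_outcome ::
  "'n::finite sel \<Rightarrow> (real \<Rightarrow> real) \<Rightarrow> ('n \<Rightarrow> real \<Rightarrow> real) \<Rightarrow> ('n \<Rightarrow> real \<Rightarrow> real) \<Rightarrow> 'n \<Rightarrow> real \<Rightarrow> real" where
  "global_outcome f Rlow ehat e i t =
     (if f i (global_rank ehat t) (Rlow t) \<ge> 0 then 1 else 0) * e i t"

definition GTE ::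
  "'n::finite sel \<Rightarrow> (real \<Rightarrow> real) \<Rightarrow> real \<Rightarrow> ('n \<Rightarrow> real \<Rightarrow> real) \<Rightarrow> ('n \<Rightarrow> real \<Rightarrow> real)
   \<Rightarrow> ('n \<Rightarrow> real \<Rightarrow> real) \<Rightarrow> ('n \<Rightarrow> real \<Rightarrow> real) \<Rightarrow> real" where
  "GTE f Rlow H eT eC ehT ehC =
     (1 / real CARD('n)) * (\<Sum>i\<in>UNIV. integral {0..H}
        (\<lambda>t. global_outcome f Rlow ehT eT i t - global_outcome f Rlow ehC eC i t))"

text \<open>Counterfactual interleaving experiment: two rankings computed for all sellers;
  a seller in the treatment set Tr uses ranking r^T and metric e^T, a seller outside
  Tr (i.e. in C) uses ranking r^C and metric e^C.\<close>

definition interleave_rank :: "('n::finite \<Rightarrow> real \<Rightarrow> real) \<Rightarrow> real \<Rightarrow> real^'n" where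
  "interleave_rank ehat t = (\<chi> j. ehat j t)"

definition interleave_outcome ::
  "'n::finite sel \<Rightarrow> (real \<Rightarrow> real) \<Rightarrow> ('n \<Rightarrow> real \<Rightarrow> real) \<Rightarrow> ('n \<Rightarrow> real \<Rightarrow> real) \<Rightarrow> 'n \<Rightarrow> real \<Rightarrow> real" where
  "interleave_outcome f Rlow ehat e i t =
     (if f i (interleave_rank ehat t) (Rlow t) \<ge> 0 then 1 else 0) * e i t"

definition GTE_hat ::
  "'n::finite sel \<Rightarrow> (real \<Rightarrow> real) \<Rightarrow> real \<Rightarrow> ('n \<Rightarrow> real \<Rightarrow> real) \<Rightarrow> ('n \<Rightarrow> real \<Rightarrow> real)
   \<Rightarrow> ('n \<Rightarrow> real \<Rightarrow> real) \<Rightarrow> ('n \<Rightarrow> real \<Rightarrow> real) \<Rightarrow> real \<Rightarrow> 'n set \<Rightarrow> real" where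
  "GTE_hat f Rlow H eT eC ehT ehC p Tr =
     (1 / (real CARD('n) * p)) * (\<Sum>i\<in>Tr. integral {0..H} (interleave_outcome f Rlow ehT eT i))
   - (1 / (real CARD('n) * (1 - p))) * (\<Sum>i\<in>UNIV - Tr. integral {0..H} (interleave_outcome f Rlow ehC eC i))"

definition assignment :: "real \<Rightarrow> ('n::finite \<Rightarrow> bool) pmf" where
  "assignment p = Pi_pmf UNIV False (\<lambda>_. bernoulli_pmf p)"

end

theory Submission
  imports Defs
begin

theorem proposition2:
  fixes f :: "'n::finite sel" and Rlow :: "real \<Rightarrow> real" and H p :: real
    and eT eC ehT ehC :: "'n \<Rightarrow> real \<Rightarrow> real"
  assumes "0 < p" "p < 1"
    and "\<And>i. global_outcome f Rlow ehT eT i integrable_on {0..H}"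
    and "\<And>i. global_outcome f Rlow ehC eC i integrable_on {0..H}"
  shows "measure_pmf.expectation (assignment p)
           (\<lambda>\<omega>. GTE_hat f Rlow H eT eC ehT ehC p {i. \<omega> i})
         = GTE f Rlow H eT eC ehT ehC"
proof -
  define N where "N = real CARD('n)"
  have Npos: "N > 0" unfolding N_def by simp
  define a where "a i = integral {0..H} (global_outcome f Rlow ehT eT i)" for i
  define b where "b i = integral {0..H} (global_outcome f Rlow ehC eC i)" for i
  define g where "g i x = (if x then a i / (N * p) else 0) - (if x then 0 else b i / (N * (1 - p)))" for i x
  have io: "interleave_outcome = global_outcome"
    by (intro ext) (simp add: interleave_outcome_def global_outcome_def interleave_rank_def global_rank_def)
  have hat: "GTE_hat f Rlow H eT eC ehT ehC p {i. \<omega> i} = (\<Sum>i\<in>UNIV. g i (\<omega> i))" for \<omega>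
  proof -
    have s1: "(\<Sum>i\<in>{i. \<omega> i}. a i) = (\<Sum>i\<in>UNIV. if \<omega> i then a i else 0)"
      by (simp add: sum.If_cases)
    have s2: "(\<Sum>i\<in>UNIV - {i. \<omega> i}. b i) = (\<Sum>i\<in>UNIV. if \<omega> i then 0 else b i)"
      by (simp add: sum.If_cases Collect_neg_eq Compl_eq_Diff_UNIV)
    have s3: "(\<Sum>i\<in>UNIV. g i (\<omega> i)) = (1 / (N * p)) * (\<Sum>i\<in>UNIV. if \<omega> i then a i else 0)
       - (1 / (N * (1 - p))) * (\<Sum>i\<in>UNIV. if \<omega> i then 0 else b i)"
      unfolding g_def sum_subtractf sum_distrib_left
      by (intro arg_cong2[where f="(-)"] sum.cong) auto
    show ?thesis
      unfolding GTE_hat_def io a_def[symmetric] b_def[symmetric] N_def[symmetric] s3 s1 s2 ..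

  qed
  have comp: "measure_pmf.expectation (assignment p) (\<lambda>\<omega>. g i (\<omega> i)) = (a i - b i) / N" for i
  proof -
    have "measure_pmf.expectation (assignment p) (\<lambda>\<omega>. g i (\<omega> i))
        = measure_pmf.expectation (map_pmf (\<lambda>\<omega>. \<omega> i) (assignment p)) (g i)"
      by simp
    also have "map_pmf (\<lambda>\<omega>. \<omega> i) (assignment p) = bernoulli_pmf p"
      unfolding assignment_def by (simp add: Pi_pmf_component)
    also have "measure_pmf.expectation (bernoulli_pmf p) (g i) = g i True * p + g i False * (1 - p)"
      using assms(1,2) by simp
    also have "\<dots> = (a i - b i) / N"
      using assms(1,2) Npos by (simp add: g_def field_simps)
    finally show ?thesis .
  qed
  have "measure_pmf.expectation (assignment p) (\<lambda>\<omega>. GTE_hat f Rlow H eT eC ehT ehC p {i. \<omega> i})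
      = measure_pmf.expectation (assignment p) (\<lambda>\<omega>. \<Sum>i\<in>UNIV. g i (\<omega> i))"
    by (simp add: hat)
  also have "\<dots> = (\<Sum>i\<in>UNIV. measure_pmf.expectation (assignment p) (\<lambda>\<omega>. g i (\<omega> i)))"
    by (rule Bochner_Integration.integral_sum) (simp add: integrable_measure_pmf_finite)
  also have "\<dots> = (\<Sum>i\<in>UNIV. (a i - b i) / N)" by (simp add: comp)
  also have "\<dots> = GTE f Rlow H eT eC ehT ehC"
    unfolding GTE_def N_def[symmetric]
    using assms(3,4)
    by (simp add: integral_diff a_def b_def sum_divide_distrib)
  finally show ?thesis .
qed

end
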